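(* Let $ABC$ be a triangle and let $(P, P')$ and $(Q, Q')$ be two pairs of isogonal conjugates with respect to $ABC$. Let $R$ be a point on line $PQ$ and $R'$ a point on line $P'Q'$. Then the conics $(ABCPR)$ and $(ABCQ'R')$ intersect (at a point other than $A,B,C$) on line $RR'$.
   Context: For five points $V,W,X,Y,Z$, $(VWXYZ)$ denotes the conic through them. *)

theory Defs
  imports "HOL-Analysis.Analysis"
begin

(* Reflection of a vector v (based at vertex V) in the angle bisector at V of
   the angle UVW.  The bisector direction is the sum of the unit vectors VU, VW. *)
definition bis_reflect :: "real^2 \<Rightarrow> real^2 \<Rightarrow> real^2 \<Rightarrow> real^2 \<Rightarrow> real^2" where
  "bis_reflect V U W v =
     (let d = (1 / norm (U - V)) *\<^sub>R (U - V) + (1 / norm (W - V)) *\<^sub>R (W - V)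
      in (2 * (v \<bullet> d) / (d \<bullet> d)) *\<^sub>R d - v)"

definition isogonal_at :: "real^2 \<Rightarrow> real^2 \<Rightarrow> real^2 \<Rightarrow> real^2 \<Rightarrow> real^2 \<Rightarrow> bool" where
  "isogonal_at V U W P P' \<longleftrightarrow> collinear {V, P', V + bis_reflect V U W (P - V)}"

definition isogonal_conj :: "real^2 \<Rightarrow> real^2 \<Rightarrow> real^2 \<Rightarrow> real^2 \<Rightarrow> real^2 \<Rightarrow> bool" where
  "isogonal_conj A B C P P' \<longleftrightarrow>
     \<not> collinear {A, B, C} \<and>
     \<not> collinear {A, B, P} \<and> \<not> collinear {B, C, P} \<and> \<not> collinear {C, A, P} \<and>
     \<not> collinear {A, B, P'} \<and> \<not> collinear {B, C, P'} \<and> \<not> collinear {C, A, P'} \<and>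
     isogonal_at A B C P P' \<and> isogonal_at B C A P P' \<and> isogonal_at C A B P P'"

definition conic_set :: "real \<Rightarrow> real \<Rightarrow> real \<Rightarrow> real \<Rightarrow> real \<Rightarrow> real \<Rightarrow> (real^2) set" where
  "conic_set a b c d e f =
     {X. a * (X$1)^2 + b * (X$1) * (X$2) + c * (X$2)^2 + d * (X$1) + e * (X$2) + f = 0}"

definition is_conic :: "(real^2) set \<Rightarrow> bool" where
  "is_conic K \<longleftrightarrow> (\<exists>a b c d e f. (a, b, c) \<noteq> (0, 0, 0) \<and> K = conic_set a b c d e f)"

end

theory Submission
  imports Defs "HOL-Computational_Algebra.Polynomial"
begin


lemma par3:
  fixes a1 a2 a3 z1 z2 z3 :: real
  assumes "a2*z3 - a3*z2 = 0" "a3*z1 - a1*z3 = 0" "a1*z2 - a2*z1 = 0"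
    and "z1 \<noteq> 0 \<or> z2 \<noteq> 0 \<or> z3 \<noteq> 0"
  shows "\<exists>\<mu>. a1 = \<mu>*z1 \<and> a2 = \<mu>*z2 \<and> a3 = \<mu>*z3"
proof -
  consider "z1 \<noteq> 0" | "z2 \<noteq> 0" | "z3 \<noteq> 0" using assms(4) by blast
  then show ?thesis
  proof cases
    case 1
    show ?thesis
      by (rule exI[of _ "a1/z1"]) (use 1 assms in \<open>auto simp: field_simps\<close>)
  next
    case 2
    show ?thesis
      by (rule exI[of _ "a2/z2"]) (use 2 assms in \<open>auto simp: field_simps\<close>)
  next
    case 3
    show ?thesis
      by (rule exI[of _ "a3/z3"]) (use 3 assms in \<open>auto simp: field_simps\<close>)
  qed
qed

lemma perp2:
  fixes a1 a2 a3 u1 u2 u3 w1 w2 w3 :: real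
  assumes "a1*u1+a2*u2+a3*u3 = 0" "a1*w1+a2*w2+a3*w3 = 0"
    and "u2*w3-u3*w2 \<noteq> 0 \<or> u3*w1-u1*w3 \<noteq> 0 \<or> u1*w2-u2*w1 \<noteq> 0"
  shows "\<exists>\<mu>. a1 = \<mu>*(u2*w3-u3*w2) \<and> a2 = \<mu>*(u3*w1-u1*w3) \<and> a3 = \<mu>*(u1*w2-u2*w1)"
proof (rule par3[OF _ _ _ assms(3)])
  show "a2 * (u1 * w2 - u2 * w1) - a3 * (u3 * w1 - u1 * w3) = 0"
    using assms(1,2) by algebra
  show "a3 * (u2 * w3 - u3 * w2) - a1 * (u1 * w2 - u2 * w1) = 0"
    using assms(1,2) by algebra
  show "a1 * (u3 * w1 - u1 * w3) - a2 * (u2 * w3 - u3 * w2) = 0"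
    using assms(1,2) by algebra
qed

lemma lemA:
  fixes p1 p2 p3 r1 r2 r3 w1 w2 w3 n1 n2 n3 :: real
  assumes "n1*p2*p3 + n2*p3*p1 + n3*p1*p2 = 0"
    and "n1*r2*r3 + n2*r3*r1 + n3*r1*r2 = 0"
    and "w1*p1+w2*p2+w3*p3 = 0" "w1*r1+w2*r2+w3*r3 = 0"
    and "w1 \<noteq> 0 \<or> w2 \<noteq> 0 \<or> w3 \<noteq> 0"
    and "p2*r3-p3*r2 \<noteq> 0 \<or> p3*r1-p1*r3 \<noteq> 0 \<or> p1*r2-p2*r1 \<noteq> 0"
    and "p1*r1*(p2*r3-p3*r2) \<noteq> 0 \<or> p2*r2*(p3*r1-p1*r3) \<noteq> 0 \<or> p3*r3*(p1*r2-p2*r1) \<noteq> 0"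
  shows "\<exists>\<alpha>. n1 = \<alpha>*p1*r1*w1 \<and> n2 = \<alpha>*p2*r2*w2 \<and> n3 = \<alpha>*p3*r3*w3"
proof -
  have nz: "(p3*p1)*(r1*r2)-(p1*p2)*(r3*r1) \<noteq> 0 \<or> (p1*p2)*(r2*r3)-(p2*p3)*(r1*r2) \<noteq> 0
     \<or> (p2*p3)*(r3*r1)-(p3*p1)*(r2*r3) \<noteq> 0"
  proof -
    have "(p3*p1)*(r1*r2)-(p1*p2)*(r3*r1) = -(p1*r1*(p2*r3-p3*r2))"
      "(p1*p2)*(r2*r3)-(p2*p3)*(r1*r2) = -(p2*r2*(p3*r1-p1*r3))"
      "(p2*p3)*(r3*r1)-(p3*p1)*(r2*r3) = -(p3*r3*(p1*r2-p2*r1))" by algebra+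
    then show ?thesis using assms(7) by auto
  qed
  obtain \<mu> where mu: "n1 = \<mu>*((p3*p1)*(r1*r2)-(p1*p2)*(r3*r1))"
     "n2 = \<mu>*((p1*p2)*(r2*r3)-(p2*p3)*(r1*r2))" "n3 = \<mu>*((p2*p3)*(r3*r1)-(p3*p1)*(r2*r3))"
    using perp2[of n1 "p2*p3" n2 "p3*p1" n3 "p1*p2" "r2*r3" "r3*r1" "r1*r2"] assms(1,2) nz
    by (auto simp: algebra_simps)
  obtain \<nu> where nu: "w1 = \<nu>*(p2*r3-p3*r2)" "w2 = \<nu>*(p3*r1-p1*r3)" "w3 = \<nu>*(p1*r2-p2*r1)"
    using perp2[of w1 p1 w2 p2 w3 p3 r1 r2 r3] assms(3,4,6) by auto
  have "\<nu> \<noteq> 0" using nu assms(5) by auto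
  show ?thesis
    by (rule exI[of _ "-\<mu>/\<nu>"]) (use \<open>\<nu> \<noteq> 0\<close> in \<open>simp add: mu nu field_simps; algebra\<close>)
qed

lemma lemB:
  fixes r1 r2 r3 t1 t2 t3 g1 g2 g3 x1 x2 x3 a1 a2 a3 b1 b2 b3 \<alpha> \<beta> :: real
  assumes "a1 = \<alpha>*g1*r1" "a2 = \<alpha>*g2*r2" "a3 = \<alpha>*g3*r3"
    and "b1 = \<beta>*g1*t1" "b2 = \<beta>*g2*t2" "b3 = \<beta>*g3*t3"
    and "g1+g2+g3 = 0"
    and "x1 \<noteq> 0" "x2 \<noteq> 0" "x3 \<noteq> 0"
    and "a1*x2*x3 + a2*x3*x1 + a3*x1*x2 = 0"
    and "b1*x2*x3 + b2*x3*x1 + b3*x1*x2 = 0"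
    and "a2*b3-a3*b2 \<noteq> 0 \<or> a3*b1-a1*b3 \<noteq> 0 \<or> a1*b2-a2*b1 \<noteq> 0"
  shows "x1*(r2*t3-r3*t2) + x2*(r3*t1-r1*t3) + x3*(r1*t2-r2*t1) = 0"
proof -
  obtain lam where l: "x2*x3 = lam*(a2*b3-a3*b2)" "x3*x1 = lam*(a3*b1-a1*b3)" "x1*x2 = lam*(a1*b2-a2*b1)"
    using perp2[of "x2*x3" a1 "x3*x1" a2 "x1*x2" a3 b1 b2 b3] assms(11,12,13)
    by (auto simp: algebra_simps)
  define c where "c = lam*\<alpha>*\<beta>"
  have l1: "x2*x3 = c*g2*g3*(r2*t3-r3*t2)" using l(1) assms(1-6) unfolding c_def by algebra
  have l2: "x3*x1 = c*g3*g1*(r3*t1-r1*t3)" using l(2) assms(1-6) unfolding c_def by algebra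
  have l3: "x1*x2 = c*g1*g2*(r1*t2-r2*t1)" using l(3) assms(1-6) unfolding c_def by algebra
  have "(x1*x2*x3) * (x1*(r2*t3-r3*t2) + x2*(r3*t1-r1*t3) + x3*(r1*t2-r2*t1))
     = (x3*x1)*(x1*x2)*(r2*t3-r3*t2) + (x1*x2)*(x2*x3)*(r3*t1-r1*t3) + (x2*x3)*(x3*x1)*(r1*t2-r2*t1)"
    by algebra
  also have "\<dots> = c^2*g1*g2*g3*(r2*t3-r3*t2)*(r3*t1-r1*t3)*(r1*t2-r2*t1)*(g1+g2+g3)"
    unfolding l1 l2 l3 by algebra
  also have "\<dots> = 0" using assms(7) by simp
  finally show ?thesis using assms(8-10) by simp
qed



definition det2 :: "real^2 \<Rightarrow> real^2 \<Rightarrow> real" where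
  "det2 u v = u$1 * v$2 - u$2 * v$1"

lemma vec2_eqI: "(x::real^2)$1 = y$1 \<Longrightarrow> x$2 = y$2 \<Longrightarrow> x = y"
  by (metis (full_types) exhaust_2 vec_eq_iff)

lemma det2_zero_iff: "det2 u v = 0 \<longleftrightarrow> u = 0 \<or> v = 0 \<or> (\<exists>c. v = c *\<^sub>R u)"
proof
  assume h: "det2 u v = 0"
  show "u = 0 \<or> v = 0 \<or> (\<exists>c. v = c *\<^sub>R u)"
  proof (cases "u$1 = 0")
    case True
    show ?thesis
    proof (cases "u$2 = 0")
      case True
      then have "u = 0" using \<open>u$1 = 0\<close> by (intro vec2_eqI) auto
      then show ?thesis by simp
    next
      case False
      have "v = (v$2/u$2) *\<^sub>R u"
        using h True False by (intro vec2_eqI) (auto simp: det2_def field_simps)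
      then show ?thesis by blast
    qed
  next
    case False
    have "v = (v$1/u$1) *\<^sub>R u"
      using h False by (intro vec2_eqI) (auto simp: det2_def field_simps)
    then show ?thesis by blast
  qed
next
  assume "u = 0 \<or> v = 0 \<or> (\<exists>c. v = c *\<^sub>R u)"
  then show "det2 u v = 0" by (auto simp: det2_def)
qed

lemma collinear_det2: "collinear {X, Y, Z :: real^2} \<longleftrightarrow> det2 (Y - X) (Z - X) = 0"
proof -
  have "{X, Y, Z} = {Y, X, Z}" by auto
  then have "collinear {X, Y, Z} \<longleftrightarrow> collinear {Y, X, Z}" by simp
  also have "\<dots> \<longleftrightarrow> collinear {0, Y - X, Z - X}"
    by (rule collinear_3) simp
  also have "\<dots> \<longleftrightarrow> det2 (Y - X) (Z - X) = 0"
    by (simp only: collinear_lemma det2_zero_iff)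
  finally show ?thesis .
qed

definition det3 :: "real \<Rightarrow> real \<Rightarrow> real \<Rightarrow> real \<Rightarrow> real \<Rightarrow> real \<Rightarrow> real \<Rightarrow> real \<Rightarrow> real \<Rightarrow> real" where
  "det3 x1 x2 x3 y1 y2 y3 z1 z2 z3 = x1*(y2*z3-y3*z2) + x2*(y3*z1-y1*z3) + x3*(y1*z2-y2*z1)"

definition comb :: "real^2 \<Rightarrow> real^2 \<Rightarrow> real^2 \<Rightarrow> real \<Rightarrow> real \<Rightarrow> real \<Rightarrow> real^2" where
  "comb A B C y1 y2 y3 = y1 *\<^sub>R A + y2 *\<^sub>R B + y3 *\<^sub>R C"

definition bc1 :: "real^2 \<Rightarrow> real^2 \<Rightarrow> real^2 \<Rightarrow> real^2 \<Rightarrow> real" where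
  "bc1 A B C Y = det2 (B - Y) (C - Y) / det2 (B - A) (C - A)"
definition bc2 :: "real^2 \<Rightarrow> real^2 \<Rightarrow> real^2 \<Rightarrow> real^2 \<Rightarrow> real" where
  "bc2 A B C Y = det2 (C - Y) (A - Y) / det2 (B - A) (C - A)"
definition bc3 :: "real^2 \<Rightarrow> real^2 \<Rightarrow> real^2 \<Rightarrow> real^2 \<Rightarrow> real" where
  "bc3 A B C Y = det2 (A - Y) (B - Y) / det2 (B - A) (C - A)"

lemma comb_comp: "comb A B C y1 y2 y3 $ 1 = y1 * A$1 + y2 * B$1 + y3 * C$1"
  "comb A B C y1 y2 y3 $ 2 = y1 * A$2 + y2 * B$2 + y3 * C$2"
  by (simp_all add: comb_def)

lemma bc_sum: "det2 (B - A) (C - A) \<noteq> 0 \<Longrightarrow> bc1 A B C Y + bc2 A B C Y + bc3 A B C Y = 1"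
  unfolding bc1_def bc2_def bc3_def
  by (simp add: divide_simps det2_def) algebra

lemma bc_decomp: "det2 (B - A) (C - A) \<noteq> 0 \<Longrightarrow> Y = comb A B C (bc1 A B C Y) (bc2 A B C Y) (bc3 A B C Y)"
  apply (rule vec2_eqI)
  unfolding comb_comp bc1_def bc2_def bc3_def
  by (simp_all add: divide_simps det2_def) algebra+

lemma comb_unique:
  assumes "det2 (B - A) (C - A) \<noteq> 0" "y1+y2+y3 = 1" "z1+z2+z3 = 1"
    and "comb A B C y1 y2 y3 = comb A B C z1 z2 z3"
  shows "y1 = z1 \<and> y2 = z2 \<and> y3 = z3"
proof -
  have e1: "y1 * A$1 + y2 * B$1 + y3 * C$1 = z1 * A$1 + z2 * B$1 + z3 * C$1"
    and e2: "y1 * A$2 + y2 * B$2 + y3 * C$2 = z1 * A$2 + z2 * B$2 + z3 * C$2"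
    using assms(4) by (metis comb_comp)+
  have "(y2 - z2) * det2 (B - A) (C - A) = 0"
    using e1 e2 assms(2,3) unfolding det2_def by simp algebra
  moreover have "(y3 - z3) * det2 (B - A) (C - A) = 0"
    using e1 e2 assms(2,3) unfolding det2_def by simp algebra
  ultimately show ?thesis using assms(1-3) by auto
qed

lemma bc_of_comb:
  assumes "det2 (B - A) (C - A) \<noteq> 0" "y1+y2+y3 = 1"
  shows "bc1 A B C (comb A B C y1 y2 y3) = y1" "bc2 A B C (comb A B C y1 y2 y3) = y2"
    "bc3 A B C (comb A B C y1 y2 y3) = y3"
  using comb_unique[OF assms(1) bc_sum[OF assms(1)] assms(2) bc_decomp[OF assms(1), symmetric]]
  by auto

lemma det2_comb:
  assumes "x1+x2+x3 = 1" "y1+y2+y3 = 1" "z1+z2+z3 = 1"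
  shows "det2 (comb A B C y1 y2 y3 - comb A B C x1 x2 x3) (comb A B C z1 z2 z3 - comb A B C x1 x2 x3)
    = det2 (B - A) (C - A) * det3 x1 x2 x3 y1 y2 y3 z1 z2 z3"
proof -
  have x: "x1 = 1 - x2 - x3" and y: "y1 = 1 - y2 - y3" and z: "z1 = 1 - z2 - z3" using assms by auto
  show ?thesis unfolding det2_def det3_def comb_def x y z by simp algebra
qed

lemma collinear_bc:
  assumes "det2 (B - A) (C - A) \<noteq> 0"
  shows "collinear {X, Y, Z} \<longleftrightarrow>
    det3 (bc1 A B C X) (bc2 A B C X) (bc3 A B C X) (bc1 A B C Y) (bc2 A B C Y) (bc3 A B C Y)
      (bc1 A B C Z) (bc2 A B C Z) (bc3 A B C Z) = 0"
proof -
  have "collinear {X, Y, Z} \<longleftrightarrow> det2 (Y - X) (Z - X) = 0" by (rule collinear_det2)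
  also have "det2 (Y - X) (Z - X) = det2 (B - A) (C - A) * det3 (bc1 A B C X) (bc2 A B C X) (bc3 A B C X) (bc1 A B C Y) (bc2 A B C Y) (bc3 A B C Y)
      (bc1 A B C Z) (bc2 A B C Z) (bc3 A B C Z)"
    by (subst (1 2 3 4) bc_decomp[OF assms]) (rule det2_comb; rule bc_sum[OF assms])
  finally show ?thesis using assms by simp
qed

definition cpoly :: "real \<Rightarrow> real \<Rightarrow> real \<Rightarrow> real \<Rightarrow> real \<Rightarrow> real \<Rightarrow> real^2 \<Rightarrow> real" where
  "cpoly a b c d e f X = a * (X$1)^2 + b * (X$1) * (X$2) + c * (X$2)^2 + d * (X$1) + e * (X$2) + f"

definition polar :: "real \<Rightarrow> real \<Rightarrow> real \<Rightarrow> real \<Rightarrow> real \<Rightarrow> real \<Rightarrow> real^2 \<Rightarrow> real^2 \<Rightarrow> real" where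
  "polar a b c d e f U V = 2*a*U$1*V$1 + b*(U$1*V$2+U$2*V$1) + 2*c*U$2*V$2 + d*(U$1+V$1) + e*(U$2+V$2) + 2*f"

lemma conic_set_cpoly: "X \<in> conic_set a b c d e f \<longleftrightarrow> cpoly a b c d e f X = 0"
  by (simp add: conic_set_def cpoly_def)

lemma cpoly_comb:
  assumes "y1+y2+y3 = 1"
  shows "cpoly a b c d e f (comb A B C y1 y2 y3) =
    y1^2 * cpoly a b c d e f A + y2^2 * cpoly a b c d e f B + y3^2 * cpoly a b c d e f C
    + y2*y3 * polar a b c d e f B C + y3*y1 * polar a b c d e f C A + y1*y2 * polar a b c d e f A B"
proof -
  have y: "y1 = 1 - y2 - y3" using assms by auto
  show ?thesis unfolding cpoly_def polar_def comb_def y by simp algebra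
qed



lemma refl_formula:
  fixes V U W :: "real^2"
  assumes nc: "\<not> collinear {V, U, W}"
  shows "bis_reflect V U W (s *\<^sub>R (U - V) + t *\<^sub>R (W - V)) =
    (s * norm (U - V) / norm (W - V)) *\<^sub>R (W - V) + (t * norm (W - V) / norm (U - V)) *\<^sub>R (U - V)"
proof -
  define u where "u = U - V"
  define w where "w = W - V"
  define c where "c = norm u"
  define b where "b = norm w"
  define m where "m = u \<bullet> w"
  define d where "d = (1 / c) *\<^sub>R u + (1 / b) *\<^sub>R w"
  define x where "x = s *\<^sub>R u + t *\<^sub>R w"
  have "U \<noteq> V" using nc by auto
  then have c0: "c > 0" unfolding c_def u_def by simp
  have "W \<noteq> V"
  proof
    assume "W = V"
    then have "{V, U, W} = {V, U}" by auto
    then show False using nc collinear_2 by metis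
  qed
  then have b0: "b > 0" unfolding b_def w_def by simp
  have d0: "d \<noteq> 0"
  proof
    assume "d = 0"
    then have "d$1 = 0" "d$2 = 0" by auto
    then have "u$1/c + w$1/b = 0" "u$2/c + w$2/b = 0" unfolding d_def by auto
    then have "w$1 = -(b/c)*u$1" "w$2 = -(b/c)*u$2" using b0 c0 by (auto simp: field_simps)
    then have "det2 u w = 0" by (simp add: det2_def)
    then show False using nc collinear_det2 unfolding u_def w_def by blast
  qed
  have uu: "u \<bullet> u = c^2" unfolding c_def by (simp add: power2_norm_eq_inner)
  have ww: "w \<bullet> w = b^2" unfolding b_def by (simp add: power2_norm_eq_inner)
  have dd: "d \<bullet> d = 2 + 2*m/(b*c)"
    unfolding d_def using b0 c0
    by (simp add: inner_add_left inner_add_right uu ww m_def inner_commute[of w u] field_simps power2_eq_square)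
  have dd0: "d \<bullet> d \<noteq> 0" using d0 by simp
  have xd: "x \<bullet> d = (s*c+t*b)*(1 + m/(b*c))"
    unfolding d_def x_def using b0 c0
    by (simp add: inner_add_left inner_add_right uu ww m_def inner_commute[of w u] field_simps power2_eq_square)
  have coef: "2 * (x \<bullet> d) / (d \<bullet> d) = s*c+t*b"
    using dd0 unfolding xd dd by (simp add: field_simps)
  have "bis_reflect V U W x = (2 * (x \<bullet> d) / (d \<bullet> d)) *\<^sub>R d - x"
    unfolding bis_reflect_def Let_def d_def c_def b_def u_def w_def by simp
  also have "\<dots> = (s*c+t*b) *\<^sub>R d - x" by (simp only: coef)
  also have "\<dots> = (s * c / b) *\<^sub>R w + (t * b / c) *\<^sub>R u"
    unfolding d_def x_def using b0 c0
    by (simp add: scaleR_add_right scaleR_add_left algebra_simps)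
  finally show ?thesis unfolding x_def u_def w_def c_def b_def .
qed

lemma isogonal_at_bc:
  fixes V U W P P' :: "real^2"
  assumes nc: "\<not> collinear {V, U, W}"
    and P: "P = V + s *\<^sub>R (U - V) + t *\<^sub>R (W - V)"
    and P': "P' = V + s' *\<^sub>R (U - V) + t' *\<^sub>R (W - V)"
    and iso: "isogonal_at V U W P P'"
  shows "s * s' * (norm (U - V))^2 = t * t' * (norm (W - V))^2"
proof -
  define u where "u = U - V"
  define w where "w = W - V"
  define c where "c = norm u"
  define b where "b = norm w"
  have "U \<noteq> V" using nc by auto
  then have c0: "c > 0" unfolding c_def u_def by simp
  have "W \<noteq> V"
  proof
    assume "W = V"
    then have "{V, U, W} = {V, U}" by auto
    then show False using nc collinear_2 by metis
  qed
  then have b0: "b > 0" unfolding b_def w_def by simp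
  have D: "det2 u w \<noteq> 0" using nc collinear_det2 unfolding u_def w_def by blast
  have "P - V = s *\<^sub>R u + t *\<^sub>R w" unfolding P u_def w_def by simp
  then have r: "bis_reflect V U W (P - V) = (s * c / b) *\<^sub>R w + (t * b / c) *\<^sub>R u"
    using refl_formula[OF nc, of s t] unfolding u_def w_def c_def b_def by simp
  have "collinear {V, P', V + bis_reflect V U W (P - V)}" using iso unfolding isogonal_at_def .
  then have "det2 (P' - V) (bis_reflect V U W (P - V)) = 0"
    unfolding collinear_det2 by simp
  then have "det2 (s' *\<^sub>R u + t' *\<^sub>R w) ((s * c / b) *\<^sub>R w + (t * b / c) *\<^sub>R u) = 0"
    unfolding r P' u_def w_def by simp
  moreover have "det2 (s' *\<^sub>R u + t' *\<^sub>R w) (\<alpha> *\<^sub>R w + \<beta> *\<^sub>R u) = (s' * \<alpha> - t' * \<beta>) * det2 u w" for \<alpha> \<beta>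
    unfolding det2_def by (simp add: algebra_simps)
  ultimately have "(s' * (s * c / b) - t' * (t * b / c)) * det2 u w = 0"
    by metis
  then have "s' * (s * c / b) - t' * (t * b / c) = 0" using D by simp
  then have "s * s' * c^2 = t * t' * b^2" using b0 c0 by (simp add: field_simps power2_eq_square)
  then show ?thesis unfolding c_def b_def u_def w_def .
qed



lemma infinite_inj_image:
  assumes "inj_on f T" "infinite T" "f ` T \<subseteq> S" shows "infinite S"
  using assms finite_imageD infinite_super by blast

lemma conic_inf:
  fixes A B C :: "real^2"
  assumes D: "det2 (B - A) (C - A) \<noteq> 0" and n: "n1 \<noteq> 0 \<or> n2 \<noteq> 0 \<or> n3 \<noteq> 0"
  shows "infinite {comb A B C y1 y2 y3 | y1 y2 y3. y1+y2+y3 = 1 \<and> n1*y2*y3 + n2*y3*y1 + n3*y1*y2 = 0}"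
    (is "infinite ?S")
proof -
  have inf_real: "infinite (UNIV :: real set)" by (rule infinite_UNIV_char_0)
  consider "n1 = 0" | "n2 = 0" | "n3 = 0" | "n1 \<noteq> 0 \<and> n2 \<noteq> 0 \<and> n3 \<noteq> 0" by blast
  then show ?thesis
  proof cases
    case 1
    let ?f = "\<lambda>s. comb A B C 0 (1-s) s"
    have "inj_on ?f UNIV"
    proof (rule inj_onI)
      fix s s' assume "?f s = ?f s'"
      then show "s = s'" using comb_unique[OF D, of 0 "1-s" s 0 "1-s'" s'] by simp
    qed
    moreover have "?f ` UNIV \<subseteq> ?S" using 1 by force
    ultimately show ?thesis using infinite_inj_image inf_real by blast
  next
    case 2
    let ?f = "\<lambda>s. comb A B C s 0 (1-s)"
    have "inj_on ?f UNIV"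
    proof (rule inj_onI)
      fix s s' assume "?f s = ?f s'"
      then show "s = s'" using comb_unique[OF D, of s 0 "1-s" s' 0 "1-s'"] by simp
    qed
    moreover have "?f ` UNIV \<subseteq> ?S" using 2 by force
    ultimately show ?thesis using infinite_inj_image inf_real by blast
  next
    case 3
    let ?f = "\<lambda>s. comb A B C s (1-s) 0"
    have "inj_on ?f UNIV"
    proof (rule inj_onI)
      fix s s' assume "?f s = ?f s'"
      then show "s = s'" using comb_unique[OF D, of s "1-s" 0 s' "1-s'" 0] by simp
    qed
    moreover have "?f ` UNIV \<subseteq> ?S" using 3 by force
    ultimately show ?thesis using infinite_inj_image inf_real by blast
  next
    case 4
    define S where "S = (\<lambda>t::real. t*n1 - t*(n2+t*n3) - (n2+t*n3))"
    define T where "T = {t. t \<noteq> 0 \<and> n2 + t*n3 \<noteq> 0 \<and> S t \<noteq> 0}"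
    define p where "p = [:-n2, n1-n2-n3, -n3:]"
    have p0: "p \<noteq> 0" using 4 unfolding p_def by simp
    have Sp: "S t = poly p t" for t unfolding S_def p_def by (simp add: algebra_simps)
    have "UNIV - T \<subseteq> {0} \<union> {-n2/n3} \<union> {t. poly p t = 0}"
    proof
      fix t assume "t \<in> UNIV - T"
      then have "t = 0 \<or> n2+t*n3 = 0 \<or> poly p t = 0" by (auto simp: T_def Sp)
      moreover have "n2+t*n3 = 0 \<Longrightarrow> t = -n2/n3" using 4 by (simp add: field_simps)
      ultimately show "t \<in> {0} \<union> {-n2/n3} \<union> {t. poly p t = 0}" by blast
    qed
    then have "finite (UNIV - T)"
      using poly_roots_finite[OF p0] by (meson finite.emptyI finite.insertI finite_Un finite_subset)
    then have infT: "infinite T" using inf_real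
      by (metis Diff_Diff_Int Diff_infinite_finite inf_top_left)
    let ?f = "\<lambda>t. comb A B C (t*n1/S t) (-t*(n2+t*n3)/S t) (-(n2+t*n3)/S t)"
    have sum1: "t*n1/S t + (-t*(n2+t*n3)/S t) + (-(n2+t*n3)/S t) = 1" if "t \<in> T" for t
    proof -
      have St: "S t \<noteq> 0" using that unfolding T_def by auto
      have "t*n1/S t + (-t*(n2+t*n3)/S t) + (-(n2+t*n3)/S t) = (t*n1 + (-t*(n2+t*n3)) + (-(n2+t*n3)))/S t"
        by (simp add: add_divide_distrib diff_divide_distrib)
      also have "t*n1 + (-t*(n2+t*n3)) + (-(n2+t*n3)) = S t" unfolding S_def by simp
      finally show ?thesis using St by simp
    qed
    have "inj_on ?f T"
    proof (rule inj_onI)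
      fix t t' assume t: "t \<in> T" and t': "t' \<in> T" and eq: "?f t = ?f t'"
      have e: "t*n1/S t = t'*n1/S t'" "-(n2+t*n3)/S t = -(n2+t'*n3)/S t'"
        using comb_unique[OF D sum1[OF t] sum1[OF t'] eq] by auto
      have St: "S t \<noteq> 0" "S t' \<noteq> 0" using t t' unfolding T_def by auto
      have e1: "t*n1 * S t' = t'*n1 * S t" using e(1) St by (simp add: field_simps)
      have e2: "(n2+t*n3) * S t' = (n2+t'*n3) * S t" using e(2) St by (simp add: field_simps)
      have "(t*n1*(n2+t'*n3) - t'*n1*(n2+t*n3)) * (S t * S t') = 0"
        using e1 e2 by algebra
      then have "t*n1*(n2+t'*n3) - t'*n1*(n2+t*n3) = 0" using St by simp
      then have "n1*n2*(t - t') = 0" by algebra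
      then show "t = t'" using 4 by simp
    qed
    moreover have "?f ` T \<subseteq> ?S"
    proof
      fix Y assume "Y \<in> ?f ` T"
      then obtain t where t: "t \<in> T" and Y: "Y = ?f t" by blast
      have St: "S t \<noteq> 0" using t unfolding T_def by auto
      have "n1*(-t*(n2+t*n3)/S t)*(-(n2+t*n3)/S t) + n2*(-(n2+t*n3)/S t)*(t*n1/S t)
          + n3*(t*n1/S t)*(-t*(n2+t*n3)/S t) = 0"
        using St by (simp add: field_simps)
      then show "Y \<in> ?S" using Y sum1[OF t] by blast
    qed
    ultimately show ?thesis using infinite_inj_image infT by blast
  qed
qed



lemma cross_nz:
  fixes y1 y2 y3 z1 z2 z3 :: real
  assumes "y1+y2+y3 = 1" "z1+z2+z3 = 1" "\<not> (y1 = z1 \<and> y2 = z2 \<and> y3 = z3)"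
  shows "y2*z3 - y3*z2 \<noteq> 0 \<or> y3*z1 - y1*z3 \<noteq> 0 \<or> y1*z2 - y2*z1 \<noteq> 0"
proof (rule ccontr)
  assume h: "\<not> ?thesis"
  have "y1 \<noteq> 0 \<or> y2 \<noteq> 0 \<or> y3 \<noteq> 0" using assms(1) by auto
  then obtain \<mu> where m: "z1 = \<mu>*y1" "z2 = \<mu>*y2" "z3 = \<mu>*y3"
    using par3[of z2 y3 z3 y2 y1 z1] h by (auto simp: algebra_simps)
  have "\<mu> = 1" using assms(1,2) unfolding m by (metis distrib_left mult.right_neutral)
  then show False using assms(3) m by simp
qed

lemma had_nz:
  fixes p1 p2 p3 r1 r2 r3 :: real
  assumes "p1 \<noteq> 0" "p2 \<noteq> 0" "p3 \<noteq> 0"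
    and "\<not> (r1 = 0 \<and> r2 = 0)" "\<not> (r2 = 0 \<and> r3 = 0)" "\<not> (r1 = 0 \<and> r3 = 0)"
    and "p2*r3-p3*r2 \<noteq> 0 \<or> p3*r1-p1*r3 \<noteq> 0 \<or> p1*r2-p2*r1 \<noteq> 0"
  shows "p1*r1*(p2*r3-p3*r2) \<noteq> 0 \<or> p2*r2*(p3*r1-p1*r3) \<noteq> 0 \<or> p3*r3*(p1*r2-p2*r1) \<noteq> 0"
proof (cases "r1 = 0")
  case True
  then show ?thesis using assms by simp
next
  case r1: False
  show ?thesis
  proof (cases "r2 = 0")
    case True
    then show ?thesis using assms r1 by simp
  next
    case r2: False
    show ?thesis
    proof (cases "r3 = 0")
      case True
      then show ?thesis using assms r1 r2 by simp
    next
      case False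
      then show ?thesis using assms r1 r2 by auto
    qed
  qed
qed

lemma iso_param:
  fixes p1 p2 p3 p1' p2' p3' kA kB kC :: real
  assumes "kA \<noteq> 0" "kB \<noteq> 0" "kC \<noteq> 0" "p1 \<noteq> 0" "p2 \<noteq> 0" "p3 \<noteq> 0"
    and "p2*p2'*kC = p3*p3'*kB" "p3*p3'*kA = p1*p1'*kC" "p1*p1'*kB = p2*p2'*kA"
  shows "p1' = (p1*p1'/kA)*kA/p1 \<and> p2' = (p1*p1'/kA)*kB/p2 \<and> p3' = (p1*p1'/kA)*kC/p3"
  using assms by (auto simp: field_simps)

lemma qw_rel:
  fixes p1 p2 p3 q1 q2 q3 kA kB kC cp cq :: real
  assumes "kA \<noteq> 0" "kB \<noteq> 0" "kC \<noteq> 0" "p1 \<noteq> 0" "p2 \<noteq> 0" "p3 \<noteq> 0"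
    "q1 \<noteq> 0" "q2 \<noteq> 0" "q3 \<noteq> 0"
  defines "p1' \<equiv> cp*kA/p1" and "p2' \<equiv> cp*kB/p2" and "p3' \<equiv> cp*kC/p3"
  defines "q1' \<equiv> cq*kA/q1" and "q2' \<equiv> cq*kB/q2" and "q3' \<equiv> cq*kC/q3"
  defines "\<kappa> \<equiv> -cp*cq^2*kA*kB*kC/(p1*p2*p3*q1*q2*q3)"
  shows "q1'*(p2'*q3'-p3'*q2') = \<kappa>*(p1*(p2*q3-p3*q2))"
    "q2'*(p3'*q1'-p1'*q3') = \<kappa>*(p2*(p3*q1-p1*q3))"
    "q3'*(p1'*q2'-p2'*q1') = \<kappa>*(p3*(p1*q2-p2*q1))"
  using assms by (simp_all add: field_simps power2_eq_square)

lemma iso_inj_cross: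
  fixes p1 p2 p3 q1 q2 q3 p1' p2' p3' kA kB kC :: real
  assumes "kA \<noteq> 0" "kB \<noteq> 0" "kC \<noteq> 0" "p1' \<noteq> 0" "p2' \<noteq> 0" "p3' \<noteq> 0"
    and "p2*p2'*kC = p3*p3'*kB" "p3*p3'*kA = p1*p1'*kC" "p1*p1'*kB = p2*p2'*kA"
    and "q2*p2'*kC = q3*p3'*kB" "q3*p3'*kA = q1*p1'*kC" "q1*p1'*kB = q2*p2'*kA"
  shows "p2*q3 - p3*q2 = 0 \<and> p3*q1 - p1*q3 = 0 \<and> p1*q2 - p2*q1 = 0"
proof -
  have "(p2*q3 - p3*q2) * (p2'*p3'*kB*kC) = 0" using assms(7,10) by algebra
  moreover have "(p3*q1 - p1*q3) * (p3'*p1'*kC*kA) = 0" using assms(8,11) by algebra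
  moreover have "(p1*q2 - p2*q1) * (p1'*p2'*kA*kB) = 0" using assms(9,12) by algebra
  ultimately show ?thesis using assms(1-6) by simp
qed

lemma cpoly_zero:
  assumes "\<forall>Y. cpoly a b c d e f Y = 0"
  shows "a = 0 \<and> b = 0 \<and> c = 0"
proof -
  have h: "cpoly a b c d e f (vector [x, y]) = a*x^2 + b*x*y + c*y^2 + d*x + e*y + f" for x y
    by (simp add: cpoly_def)
  have e0: "f = 0" using assms h[of 0 0] by simp
  have e1: "a + d = 0" "a - d = 0" using assms h[of 1 0] h[of "-1" 0] e0 by simp_all
  have e2: "c + e = 0" "c - e = 0" using assms h[of 0 1] h[of 0 "-1"] e0 by simp_all
  have e3: "a + b + c + d + e = 0" using assms h[of 1 1] e0 by simp
  show ?thesis using e1 e2 e3 by linarith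
qed



lemma side_inf:
  assumes D: "det2 (B - A) (C - A) \<noteq> 0"
  shows "infinite (range (\<lambda>s. comb A B C 0 (1-s) s))"
    "infinite (range (\<lambda>s. comb A B C s 0 (1-s)))"
    "infinite (range (\<lambda>s. comb A B C s (1-s) 0))"
proof -
  have "inj (\<lambda>s. comb A B C 0 (1-s) s)"
  proof (rule injI)
    fix s s' assume "comb A B C 0 (1-s) s = comb A B C 0 (1-s') s'"
    then show "s = s'" using comb_unique[OF D, of 0 "1-s" s 0 "1-s'" s'] by simp
  qed
  then show "infinite (range (\<lambda>s. comb A B C 0 (1-s) s))" using finite_imageD infinite_UNIV_char_0 by blast
  have "inj (\<lambda>s. comb A B C s 0 (1-s))"
  proof (rule injI)
    fix s s' assume "comb A B C s 0 (1-s) = comb A B C s' 0 (1-s')"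
    then show "s = s'" using comb_unique[OF D, of s 0 "1-s" s' 0 "1-s'"] by simp
  qed
  then show "infinite (range (\<lambda>s. comb A B C s 0 (1-s)))" using finite_imageD infinite_UNIV_char_0 by blast
  have "inj (\<lambda>s. comb A B C s (1-s) 0)"
  proof (rule injI)
    fix s s' assume "comb A B C s (1-s) 0 = comb A B C s' (1-s') 0"
    then show "s = s'" using comb_unique[OF D, of s "1-s" 0 s' "1-s'" 0] by simp
  qed
  then show "infinite (range (\<lambda>s. comb A B C s (1-s) 0))" using finite_imageD infinite_UNIV_char_0 by blast
qed

lemma comb_shift:
  assumes "y1+y2+y3 = 1"
  shows "comb A B C y1 y2 y3 = A + y2 *\<^sub>R (B - A) + y3 *\<^sub>R (C - A)"
    "comb A B C y1 y2 y3 = B + y3 *\<^sub>R (C - B) + y1 *\<^sub>R (A - B)"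
    "comb A B C y1 y2 y3 = C + y1 *\<^sub>R (A - C) + y2 *\<^sub>R (B - C)"
proof -
  have y: "y1 = 1 - y2 - y3" using assms by simp
  show "comb A B C y1 y2 y3 = A + y2 *\<^sub>R (B - A) + y3 *\<^sub>R (C - A)"
    by (rule vec2_eqI) (simp_all add: comb_comp y algebra_simps)
  show "comb A B C y1 y2 y3 = B + y3 *\<^sub>R (C - B) + y1 *\<^sub>R (A - B)"
    by (rule vec2_eqI) (simp_all add: comb_comp y algebra_simps)
  show "comb A B C y1 y2 y3 = C + y1 *\<^sub>R (A - C) + y2 *\<^sub>R (B - C)"
    by (rule vec2_eqI) (simp_all add: comb_comp y algebra_simps)
qed

theorem lemma2p2:
  fixes A B C P P' Q Q' R R' X :: "real^2" and K1 K2 :: "(real^2) set"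
  assumes "\<not> collinear {A, B, C}"
    and "isogonal_conj A B C P P'"
    and "isogonal_conj A B C Q Q'"
    and "P \<noteq> Q"
    and "collinear {P, Q, R}"
    and "collinear {P', Q', R'}"
    and "R \<notin> {A, B, C, P}"
    and "R' \<notin> {A, B, C, Q'}"
    and "R \<noteq> R'"
    and "is_conic K1" and "{A, B, C, P, R} \<subseteq> K1"
    and "is_conic K2" and "{A, B, C, Q', R'} \<subseteq> K2"
    and "finite (K1 \<inter> K2)"
    and "X \<in> K1 \<inter> K2" and "X \<notin> {A, B, C}"
  shows "collinear {R, R', X}"
proof -
  note nc = assms(1)
  have D: "det2 (B - A) (C - A) \<noteq> 0" using nc collinear_det2 by blast
  define bA where "bA = bc1 A B C"
  define bB where "bB = bc2 A B C"
  define bC where "bC = bc3 A B C"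
  have sumb: "bA Y + bB Y + bC Y = 1" for Y
    unfolding bA_def bB_def bC_def by (rule bc_sum[OF D])
  have decb: "Y = comb A B C (bA Y) (bB Y) (bC Y)" for Y
    unfolding bA_def bB_def bC_def by (rule bc_decomp[OF D])
  have colb: "collinear {X, Y, Z} \<longleftrightarrow> det3 (bA X) (bB X) (bC X) (bA Y) (bB Y) (bC Y) (bA Z) (bB Z) (bC Z) = 0" for X Y Z
    unfolding bA_def bB_def bC_def by (rule collinear_bc[OF D])
  have eqb: "Y = Z" if "bA Y = bA Z" "bB Y = bB Z" "bC Y = bC Z" for Y Z
    using decb[of Y] decb[of Z] that by simp
  have ofc: "bA (comb A B C y1 y2 y3) = y1" "bB (comb A B C y1 y2 y3) = y2" "bC (comb A B C y1 y2 y3) = y3"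
    if "y1+y2+y3 = 1" for y1 y2 y3
    unfolding bA_def bB_def bC_def using bc_of_comb[OF D that] by auto
  have cA: "A = comb A B C 1 0 0" and cB: "B = comb A B C 0 1 0" and cC: "C = comb A B C 0 0 1"
    by (simp_all add: comb_def)
  have vA: "bA A = 1" "bB A = 0" "bC A = 0" using ofc[of 1 0 0] cA by simp_all
  have vB: "bA B = 0" "bB B = 1" "bC B = 0" using ofc[of 0 1 0] cB by simp_all
  have vC: "bA C = 0" "bB C = 0" "bC C = 1" using ofc[of 0 0 1] cC by simp_all
  have notA: "Y = A" if "bB Y = 0" "bC Y = 0" for Y
    using eqb[of Y A] that sumb[of Y] vA by simp
  have notB: "Y = B" if "bA Y = 0" "bC Y = 0" for Y
    using eqb[of Y B] that sumb[of Y] vB by simp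
  have notC: "Y = C" if "bA Y = 0" "bB Y = 0" for Y
    using eqb[of Y C] that sumb[of Y] vC by simp
  have offBC: "bA Y \<noteq> 0" if "\<not> collinear {B, C, Y}" for Y
    using that colb[of B C Y] vB vC by (simp add: det3_def)
  have offCA: "bB Y \<noteq> 0" if "\<not> collinear {C, A, Y}" for Y
    using that colb[of C A Y] vC vA by (simp add: det3_def)
  have offAB: "bC Y \<noteq> 0" if "\<not> collinear {A, B, Y}" for Y
    using that colb[of A B Y] vA vB by (simp add: det3_def)
  obtain a1 b1 c1 d1 e1 f1 where K1: "K1 = conic_set a1 b1 c1 d1 e1 f1" and abc1: "(a1, b1, c1) \<noteq> (0, 0, 0)"
    using assms(10) unfolding is_conic_def by blast
  obtain a2 b2 c2 d2 e2 f2 where K2: "K2 = conic_set a2 b2 c2 d2 e2 f2" and abc2: "(a2, b2, c2) \<noteq> (0, 0, 0)"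
    using assms(12) unfolding is_conic_def by blast
  define m1 where "m1 = polar a1 b1 c1 d1 e1 f1 B C"
  define m2 where "m2 = polar a1 b1 c1 d1 e1 f1 C A"
  define m3 where "m3 = polar a1 b1 c1 d1 e1 f1 A B"
  define l1 where "l1 = polar a2 b2 c2 d2 e2 f2 B C"
  define l2 where "l2 = polar a2 b2 c2 d2 e2 f2 C A"
  define l3 where "l3 = polar a2 b2 c2 d2 e2 f2 A B"
  have G1V: "cpoly a1 b1 c1 d1 e1 f1 A = 0" "cpoly a1 b1 c1 d1 e1 f1 B = 0" "cpoly a1 b1 c1 d1 e1 f1 C = 0"
    using assms(11) unfolding K1 by (auto simp: conic_set_cpoly)
  have G2V: "cpoly a2 b2 c2 d2 e2 f2 A = 0" "cpoly a2 b2 c2 d2 e2 f2 B = 0" "cpoly a2 b2 c2 d2 e2 f2 C = 0"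
    using assms(13) unfolding K2 by (auto simp: conic_set_cpoly)
  have inK1c: "comb A B C y1 y2 y3 \<in> K1 \<longleftrightarrow> m1*y2*y3 + m2*y3*y1 + m3*y1*y2 = 0"
    if "y1+y2+y3 = 1" for y1 y2 y3
    unfolding K1 conic_set_cpoly cpoly_comb[OF that] G1V m1_def m2_def m3_def
    by (simp add: mult_ac)
  have inK2c: "comb A B C y1 y2 y3 \<in> K2 \<longleftrightarrow> l1*y2*y3 + l2*y3*y1 + l3*y1*y2 = 0"
    if "y1+y2+y3 = 1" for y1 y2 y3
    unfolding K2 conic_set_cpoly cpoly_comb[OF that] G2V l1_def l2_def l3_def
    by (simp add: mult_ac)
  have inK1: "Y \<in> K1 \<longleftrightarrow> m1*bB Y*bC Y + m2*bC Y*bA Y + m3*bA Y*bB Y = 0" for Y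
    using inK1c[OF sumb[of Y]] decb[of Y] by simp
  have inK2: "Y \<in> K2 \<longleftrightarrow> l1*bB Y*bC Y + l2*bC Y*bA Y + l3*bA Y*bB Y = 0" for Y
    using inK2c[OF sumb[of Y]] decb[of Y] by simp
  have mnz: "m1 \<noteq> 0 \<or> m2 \<noteq> 0 \<or> m3 \<noteq> 0"
  proof (rule ccontr)
    assume "\<not> ?thesis"
    then have "\<forall>Y. cpoly a1 b1 c1 d1 e1 f1 Y = 0" using inK1 unfolding K1 conic_set_cpoly by simp
    then show False using cpoly_zero abc1 by blast
  qed
  have lnz: "l1 \<noteq> 0 \<or> l2 \<noteq> 0 \<or> l3 \<noteq> 0"
  proof (rule ccontr)
    assume "\<not> ?thesis"
    then have "\<forall>Y. cpoly a2 b2 c2 d2 e2 f2 Y = 0" using inK2 unfolding K2 conic_set_cpoly by simp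
    then show False using cpoly_zero abc2 by blast
  qed
  define p1 where "p1 = bA P" define p2 where "p2 = bB P" define p3 where "p3 = bC P"
  define q1 where "q1 = bA Q" define q2 where "q2 = bB Q" define q3 where "q3 = bC Q"
  define r1 where "r1 = bA R" define r2 where "r2 = bB R" define r3 where "r3 = bC R"
  define pp1 where "pp1 = bA P'" define pp2 where "pp2 = bB P'" define pp3 where "pp3 = bC P'"
  define qq1 where "qq1 = bA Q'" define qq2 where "qq2 = bB Q'" define qq3 where "qq3 = bC Q'"
  define rr1 where "rr1 = bA R'" define rr2 where "rr2 = bB R'" define rr3 where "rr3 = bC R'"
  define x1 where "x1 = bA X" define x2 where "x2 = bB X" define x3 where "x3 = bC X"
  note bdefs = p1_def p2_def p3_def q1_def q2_def q3_def r1_def r2_def r3_def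
    pp1_def pp2_def pp3_def qq1_def qq2_def qq3_def rr1_def rr2_def rr3_def x1_def x2_def x3_def
  have icP: "\<not> collinear {A, B, P}" "\<not> collinear {B, C, P}" "\<not> collinear {C, A, P}"
    "\<not> collinear {A, B, P'}" "\<not> collinear {B, C, P'}" "\<not> collinear {C, A, P'}"
    "isogonal_at A B C P P'" "isogonal_at B C A P P'" "isogonal_at C A B P P'"
    using assms(2) unfolding isogonal_conj_def by auto
  have icQ: "\<not> collinear {A, B, Q}" "\<not> collinear {B, C, Q}" "\<not> collinear {C, A, Q}"
    "\<not> collinear {A, B, Q'}" "\<not> collinear {B, C, Q'}" "\<not> collinear {C, A, Q'}"
    "isogonal_at A B C Q Q'" "isogonal_at B C A Q Q'" "isogonal_at C A B Q Q'"
    using assms(3) unfolding isogonal_conj_def by auto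
  have pnz: "p1 \<noteq> 0" "p2 \<noteq> 0" "p3 \<noteq> 0" "pp1 \<noteq> 0" "pp2 \<noteq> 0" "pp3 \<noteq> 0"
    using offBC offCA offAB icP unfolding bdefs by auto
  have qnz: "q1 \<noteq> 0" "q2 \<noteq> 0" "q3 \<noteq> 0" "qq1 \<noteq> 0" "qq2 \<noteq> 0" "qq3 \<noteq> 0"
    using offBC offCA offAB icQ unfolding bdefs by auto
  have nc2: "\<not> collinear {B, C, A}" "\<not> collinear {C, A, B}"
    using nc by (simp_all add: insert_commute)
  define kA where "kA = (norm (C - B))^2"
  define kB where "kB = (norm (A - C))^2"
  define kC where "kC = (norm (B - A))^2"
  have "C \<noteq> A"
  proof
    assume "C = A"
    then have "{A, B, C} = {A, B}" by auto
    then show False using nc collinear_2 by simp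
  qed
  moreover have "A \<noteq> B" "B \<noteq> C" using nc by auto
  ultimately have "A \<noteq> B" "B \<noteq> C" "C \<noteq> A" by auto
  then have knz: "kA \<noteq> 0" "kB \<noteq> 0" "kC \<noteq> 0" unfolding kA_def kB_def kC_def by auto
  have nm: "norm (C - A) = norm (A - C)" "norm (A - B) = norm (B - A)" "norm (B - C) = norm (C - B)"
    by (simp_all add: norm_minus_commute)
  have iso3: "y2*y2'*kC = y3*y3'*kB \<and> y3*y3'*kA = y1*y1'*kC \<and> y1*y1'*kB = y2*y2'*kA"
    if "isogonal_at A B C Y Y'" "isogonal_at B C A Y Y'" "isogonal_at C A B Y Y'"
      "y1 = bA Y" "y2 = bB Y" "y3 = bC Y" "y1' = bA Y'" "y2' = bB Y'" "y3' = bC Y'" for Y Y' y1 y2 y3 y1' y2' y3'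
  proof -
    have s: "y1+y2+y3 = 1" "y1'+y2'+y3' = 1" using sumb that(4-9) by auto
    have Y: "Y = comb A B C y1 y2 y3" "Y' = comb A B C y1' y2' y3'" using decb that(4-9) by auto
    have "y2*y2'*kC = y3*y3'*kB"
      using isogonal_at_bc[OF nc, of Y y2 y3 Y' y2' y3'] that(1) comb_shift(1)[OF s(1)] comb_shift(1)[OF s(2)] Y
      unfolding kB_def kC_def nm by (simp add: mult_ac)
    moreover have "y3*y3'*kA = y1*y1'*kC"
      using isogonal_at_bc[OF nc2(1), of Y y3 y1 Y' y3' y1'] that(2) comb_shift(2)[OF s(1)] comb_shift(2)[OF s(2)] Y
      unfolding kA_def kC_def nm by (simp add: mult_ac)
    moreover have "y1*y1'*kB = y2*y2'*kA"
      using isogonal_at_bc[OF nc2(2), of Y y1 y2 Y' y1' y2'] that(3) comb_shift(3)[OF s(1)] comb_shift(3)[OF s(2)] Y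
      unfolding kA_def kB_def nm by (simp add: mult_ac)
    ultimately show ?thesis by blast
  qed
  have isoP: "p2*pp2*kC = p3*pp3*kB" "p3*pp3*kA = p1*pp1*kC" "p1*pp1*kB = p2*pp2*kA"
    using iso3[OF icP(7-9)] unfolding bdefs by auto
  have isoQ: "q2*qq2*kC = q3*qq3*kB" "q3*qq3*kA = q1*qq1*kC" "q1*qq1*kB = q2*qq2*kA"
    using iso3[OF icQ(7-9)] unfolding bdefs by auto
  have sP: "p1+p2+p3 = 1" and sQ: "q1+q2+q3 = 1" and sR: "r1+r2+r3 = 1"
    and sP': "pp1+pp2+pp3 = 1" and sQ': "qq1+qq2+qq3 = 1" and sR': "rr1+rr2+rr3 = 1"
    and sX: "x1+x2+x3 = 1"
    using sumb unfolding bdefs by auto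
  have mP: "m1*p2*p3 + m2*p3*p1 + m3*p1*p2 = 0" and mR: "m1*r2*r3 + m2*r3*r1 + m3*r1*r2 = 0"
    using assms(11) inK1 unfolding bdefs by auto
  have lQ: "l1*qq2*qq3 + l2*qq3*qq1 + l3*qq1*qq2 = 0" and lR: "l1*rr2*rr3 + l2*rr3*rr1 + l3*rr1*rr2 = 0"
    using assms(13) inK2 unfolding bdefs by auto
  have mX: "m1*x2*x3 + m2*x3*x1 + m3*x1*x2 = 0" and lX: "l1*x2*x3 + l2*x3*x1 + l3*x1*x2 = 0"
    using assms(15) inK1 inK2 unfolding bdefs by auto
  have colPQR: "det3 p1 p2 p3 q1 q2 q3 r1 r2 r3 = 0"
    using assms(5) colb unfolding bdefs by auto
  have colPQR': "det3 pp1 pp2 pp3 qq1 qq2 qq3 rr1 rr2 rr3 = 0"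
    using assms(6) colb unfolding bdefs by auto
  have neq: "\<not> (y1 = z1 \<and> y2 = z2 \<and> y3 = z3)"
    if "Y \<noteq> Z" "y1 = bA Y" "y2 = bB Y" "y3 = bC Y" "z1 = bA Z" "z2 = bB Z" "z3 = bC Z" for Y Z y1 y2 y3 z1 z2 z3
    using eqb[of Y Z] that by auto
  define w1 where "w1 = p2*q3-p3*q2"
  define w2 where "w2 = p3*q1-p1*q3"
  define w3 where "w3 = p1*q2-p2*q1"
  have wnz: "w1 \<noteq> 0 \<or> w2 \<noteq> 0 \<or> w3 \<noteq> 0"
    unfolding w1_def w2_def w3_def
    by (rule cross_nz[OF sP sQ neq[OF assms(4)]]) (simp_all add: bdefs)
  have prnz: "p2*r3-p3*r2 \<noteq> 0 \<or> p3*r1-p1*r3 \<noteq> 0 \<or> p1*r2-p2*r1 \<noteq> 0"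
    by (rule cross_nz[OF sP sR neq[of P R]]) (use assms(7) in \<open>auto simp: bdefs\<close>)
  have rnv: "\<not> (r1 = 0 \<and> r2 = 0)" "\<not> (r2 = 0 \<and> r3 = 0)" "\<not> (r1 = 0 \<and> r3 = 0)"
    using notA[of R] notB[of R] notC[of R] assms(7) unfolding bdefs by auto
  obtain \<alpha> where al: "m1 = \<alpha>*p1*r1*w1" "m2 = \<alpha>*p2*r2*w2" "m3 = \<alpha>*p3*r3*w3"
  proof -
    have "w1*p1+w2*p2+w3*p3 = 0" unfolding w1_def w2_def w3_def by algebra
    moreover have "w1*r1+w2*r2+w3*r3 = 0" using colPQR unfolding w1_def w2_def w3_def det3_def by algebra
    ultimately show ?thesis
      using lemA[OF mP mR _ _ wnz prnz had_nz[OF pnz(1-3) rnv prnz]] that by blast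
  qed
  define ww1 where "ww1 = pp2*qq3-pp3*qq2"
  define ww2 where "ww2 = pp3*qq1-pp1*qq3"
  define ww3 where "ww3 = pp1*qq2-pp2*qq1"
  have pqne: "\<not> (pp1 = qq1 \<and> pp2 = qq2 \<and> pp3 = qq3)"
  proof
    assume h: "pp1 = qq1 \<and> pp2 = qq2 \<and> pp3 = qq3"
    have "p2*q3 - p3*q2 = 0 \<and> p3*q1 - p1*q3 = 0 \<and> p1*q2 - p2*q1 = 0"
      by (rule iso_inj_cross[OF knz pnz(4-6) isoP]) (use isoQ h in simp_all)
    then show False using wnz unfolding w1_def w2_def w3_def by simp
  qed
  have wwnz: "ww1 \<noteq> 0 \<or> ww2 \<noteq> 0 \<or> ww3 \<noteq> 0"
    unfolding ww1_def ww2_def ww3_def by (rule cross_nz[OF sP' sQ' pqne])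
  have qrnz: "qq2*rr3-qq3*rr2 \<noteq> 0 \<or> qq3*rr1-qq1*rr3 \<noteq> 0 \<or> qq1*rr2-qq2*rr1 \<noteq> 0"
    by (rule cross_nz[OF sQ' sR' neq[of Q' R']]) (use assms(8) in \<open>auto simp: bdefs\<close>)
  have rrnv: "\<not> (rr1 = 0 \<and> rr2 = 0)" "\<not> (rr2 = 0 \<and> rr3 = 0)" "\<not> (rr1 = 0 \<and> rr3 = 0)"
    using notA[of R'] notB[of R'] notC[of R'] assms(8) unfolding bdefs by auto
  obtain \<alpha>2 where al2: "l1 = \<alpha>2*qq1*rr1*ww1" "l2 = \<alpha>2*qq2*rr2*ww2" "l3 = \<alpha>2*qq3*rr3*ww3"
  proof -
    have "ww1*qq1+ww2*qq2+ww3*qq3 = 0" unfolding ww1_def ww2_def ww3_def by algebra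
    moreover have "ww1*rr1+ww2*rr2+ww3*rr3 = 0" using colPQR' unfolding ww1_def ww2_def ww3_def det3_def by algebra
    ultimately show ?thesis
      using lemA[OF lQ lR _ _ wwnz qrnz had_nz[OF qnz(4-6) rrnv qrnz]] that by blast
  qed
  define cp where "cp = p1*pp1/kA"
  define cq where "cq = q1*qq1/kA"
  have ppe: "pp1 = cp*kA/p1" "pp2 = cp*kB/p2" "pp3 = cp*kC/p3"
    using iso_param[OF knz pnz(1-3) isoP] unfolding cp_def by auto
  have qqe: "qq1 = cq*kA/q1" "qq2 = cq*kB/q2" "qq3 = cq*kC/q3"
    using iso_param[OF knz qnz(1-3) isoQ] unfolding cq_def by auto
  define \<kappa> where "\<kappa> = -cp*cq^2*kA*kB*kC/(p1*p2*p3*q1*q2*q3)"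
  have qw: "qq1*ww1 = \<kappa>*(p1*w1)" "qq2*ww2 = \<kappa>*(p2*w2)" "qq3*ww3 = \<kappa>*(p3*w3)"
    unfolding ww1_def ww2_def ww3_def w1_def w2_def w3_def \<kappa>_def ppe qqe
    by (rule qw_rel[OF knz pnz(1-3) qnz(1-3)])+
  have a: "m1 = \<alpha>*(p1*w1)*r1" "m2 = \<alpha>*(p2*w2)*r2" "m3 = \<alpha>*(p3*w3)*r3"
    using al by (simp_all add: mult_ac)
  have b: "l1 = (\<alpha>2*\<kappa>)*(p1*w1)*rr1" "l2 = (\<alpha>2*\<kappa>)*(p2*w2)*rr2" "l3 = (\<alpha>2*\<kappa>)*(p3*w3)*rr3"
  proof -
    have "l1 = \<alpha>2*rr1*(qq1*ww1)" "l2 = \<alpha>2*rr2*(qq2*ww2)" "l3 = \<alpha>2*rr3*(qq3*ww3)"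
      using al2 by (simp_all add: mult_ac)
    then show "l1 = (\<alpha>2*\<kappa>)*(p1*w1)*rr1" "l2 = (\<alpha>2*\<kappa>)*(p2*w2)*rr2" "l3 = (\<alpha>2*\<kappa>)*(p3*w3)*rr3"
      unfolding qw by (simp_all add: mult_ac)
  qed
  have gsum: "p1*w1 + p2*w2 + p3*w3 = 0" unfolding w1_def w2_def w3_def by algebra
  have fin: "finite (K1 \<inter> K2)" by (rule assms(14))
  have xnz1: "x1 \<noteq> 0"
  proof
    assume h: "x1 = 0"
    have "x2 \<noteq> 0" using notC[of X] assms(16) h unfolding bdefs by auto
    moreover have "x3 \<noteq> 0" using notB[of X] assms(16) h unfolding bdefs by auto
    ultimately have z: "m1 = 0" "l1 = 0" using mX lX h by simp_all
    have "range (\<lambda>s. comb A B C 0 (1-s) s) \<subseteq> K1 \<inter> K2"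
      using inK1c[of 0 "1-_" _] inK2c[of 0 "1-_" _] z by auto
    then show False using side_inf(1)[OF D] fin finite_subset by blast
  qed
  have xnz2: "x2 \<noteq> 0"
  proof
    assume h: "x2 = 0"
    have "x1 \<noteq> 0" using notC[of X] assms(16) h unfolding bdefs by auto
    moreover have "x3 \<noteq> 0" using notA[of X] assms(16) h unfolding bdefs by auto
    ultimately have z: "m2 = 0" "l2 = 0" using mX lX h by simp_all
    have "range (\<lambda>s. comb A B C s 0 (1-s)) \<subseteq> K1 \<inter> K2"
      using inK1c[of _ 0 "1-_"] inK2c[of _ 0 "1-_"] z by auto
    then show False using side_inf(2)[OF D] fin finite_subset by blast
  qed
  have xnz3: "x3 \<noteq> 0"
  proof
    assume h: "x3 = 0"
    have "x1 \<noteq> 0" using notB[of X] assms(16) h unfolding bdefs by auto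
    moreover have "x2 \<noteq> 0" using notA[of X] assms(16) h unfolding bdefs by auto
    ultimately have z: "m3 = 0" "l3 = 0" using mX lX h by simp_all
    have "range (\<lambda>s. comb A B C s (1-s) 0) \<subseteq> K1 \<inter> K2"
      using inK1c[of _ "1-_" 0] inK2c[of _ "1-_" 0] z by auto
    then show False using side_inf(3)[OF D] fin finite_subset by blast
  qed
  have mlnz: "m2*l3-m3*l2 \<noteq> 0 \<or> m3*l1-m1*l3 \<noteq> 0 \<or> m1*l2-m2*l1 \<noteq> 0"
  proof (rule ccontr)
    assume h: "\<not> ?thesis"
    have "\<exists>\<mu>. l1 = \<mu>*m1 \<and> l2 = \<mu>*m2 \<and> l3 = \<mu>*m3"
      by (rule par3) (use h mnz in \<open>auto simp: algebra_simps\<close>)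
    then obtain \<mu> where mu: "l1 = \<mu>*m1" "l2 = \<mu>*m2" "l3 = \<mu>*m3" by blast
    have "{comb A B C y1 y2 y3 | y1 y2 y3. y1+y2+y3 = 1 \<and> m1*y2*y3 + m2*y3*y1 + m3*y1*y2 = 0} \<subseteq> K1 \<inter> K2"
    proof
      fix Y assume "Y \<in> {comb A B C y1 y2 y3 | y1 y2 y3. y1+y2+y3 = 1 \<and> m1*y2*y3 + m2*y3*y1 + m3*y1*y2 = 0}"
      then obtain y1 y2 y3 where Y: "Y = comb A B C y1 y2 y3" and s: "y1+y2+y3 = 1"
        and e: "m1*y2*y3 + m2*y3*y1 + m3*y1*y2 = 0" by blast
      have "l1*y2*y3 + l2*y3*y1 + l3*y1*y2 = \<mu>*(m1*y2*y3 + m2*y3*y1 + m3*y1*y2)"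
        unfolding mu by (simp add: algebra_simps)
      then show "Y \<in> K1 \<inter> K2" using inK1c[OF s] inK2c[OF s] e Y by simp
    qed
    then show False using conic_inf[OF D mnz] fin finite_subset by blast
  qed
  have fin_eq: "x1*(r2*rr3-r3*rr2) + x2*(r3*rr1-r1*rr3) + x3*(r1*rr2-r2*rr1) = 0"
    by (rule lemB[OF a b gsum xnz1 xnz2 xnz3 mX lX mlnz])
  have "det3 r1 r2 r3 rr1 rr2 rr3 x1 x2 x3 = 0"
    using fin_eq unfolding det3_def by algebra
  then show ?thesis using colb[of R R' X] unfolding bdefs by simp
qed


end
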